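(* Let $G=(V,E)$ be a finite connected simple graph with adjacency matrix $A$, let $W\subseteq V$ be a nonempty set of marked vertices, let $\gamma>0$, and let $H=-\gamma A-\sum_{w\in W}|w\rangle\langle w|$ on $\mathcal{H}=\mathbb{C}^V$. Let $\phi_0$ be the largest eigenvalue of $A$ and $|\phi_0\rangle$ a normalized eigenvector of $A$ for $\phi_0$. Let $\lambda^-$ be the smallest eigenvalue of $H$ and $|\lambda^-\rangle$ an associated eigenvector. Then $\lambda^-$ is a simple eigenvalue of $H$, $\langle\lambda^-|\phi_0\rangle\neq0$, and $\lambda^-<-\gamma\phi_0$.
   Context: $\{|v\rangle: v\in V\}$ is the computational basis of $\mathcal{H}$. Since $G$ is connected, $\phi_0$ is a simple eigenvalue of $A$. *)

theory Defs
  imports "HOL-Analysis.Analysis"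
begin

text \<open>Vertices of the graph are the elements of a finite type 'n; the Hilbert space is complex^'n,
  with computational basis vectors ket v = axis v 1.\<close>

definition simple_graph :: "('n \<Rightarrow> 'n \<Rightarrow> bool) \<Rightarrow> bool" where
  "simple_graph E \<longleftrightarrow> (\<forall>x y. E x y \<longrightarrow> E y x) \<and> (\<forall>x. \<not> E x x)"

definition connected_graph :: "('n \<Rightarrow> 'n \<Rightarrow> bool) \<Rightarrow> bool" where
  "connected_graph E \<longleftrightarrow> (\<forall>x y. E\<^sup>*\<^sup>* x y)"

definition adjacency_matrix :: "('n::finite \<Rightarrow> 'n \<Rightarrow> bool) \<Rightarrow> complex^'n^'n" where
  "adjacency_matrix E = (\<chi> i j. if E i j then 1 else 0)"

definition ket :: "'n::finite \<Rightarrow> complex^'n" where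
  "ket v = axis v 1"

definition braket :: "complex^'n::finite \<Rightarrow> complex^'n \<Rightarrow> complex" where
  "braket a b = (\<Sum>i\<in>UNIV. cnj (a $ i) * b $ i)"

definition outer :: "complex^'n::finite \<Rightarrow> complex^'n \<Rightarrow> complex^'n^'n" where
  "outer u v = (\<chi> i j. u $ i * cnj (v $ j))"

definition is_eigenvalue :: "complex^'n::finite^'n \<Rightarrow> complex \<Rightarrow> bool" where
  "is_eigenvalue M \<mu> \<longleftrightarrow> (\<exists>v. v \<noteq> 0 \<and> M *v v = \<mu> *s v)"

text \<open>A simple eigenvalue: its eigenspace is one-dimensional (for Hermitian matrices this is
  the same as algebraic multiplicity one).\<close>
definition simple_eigenvalue :: "complex^'n::finite^'n \<Rightarrow> complex \<Rightarrow> bool" where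
  "simple_eigenvalue M \<mu> \<longleftrightarrow> is_eigenvalue M \<mu> \<and>
     (\<forall>u v. u \<noteq> 0 \<longrightarrow> M *v u = \<mu> *s u \<longrightarrow> M *v v = \<mu> *s v \<longrightarrow> (\<exists>c. v = c *s u))"

end

theory Submission imports Defs begin

lemma inner_braket: "inner (x::complex^'n::finite) y = Re (braket x y)"
  by (simp add: inner_vec_def braket_def inner_complex_def Re_sum)

lemma braket_cnj: "braket x y = cnj (braket y x)"
  by (simp add: braket_def mult.commute)

lemma mv_add: "(M::complex^'n::finite^'n) *v (x + y) = M *v x + M *v y"
  by (simp add: vec_eq_iff matrix_vector_mult_def algebra_simps sum.distrib)

lemma mv_scaleR: "(M::complex^'n::finite^'n) *v (t *\<^sub>R x) = t *\<^sub>R (M *v x)"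
  by (simp add: vec_eq_iff matrix_vector_mult_def scaleR_sum_right)

lemma mv_neg: "(- M::complex^'n::finite^'n) *v x = - (M *v x)"
  by (simp add: vec_eq_iff matrix_vector_mult_def sum_negf)

lemma ofreal_smult: "complex_of_real c *s (x::complex^'n::finite) = c *\<^sub>R x"
  by (simp add: vec_eq_iff) (metis scaleR_conv_of_real)

lemma norm_sq_inner: "norm (x::complex^'n::finite)^2 = inner x x"
  by (simp add: power2_norm_eq_inner)

definition vabs :: "complex^'n::finite \<Rightarrow> complex^'n" where
  "vabs x = (\<chi> i. complex_of_real (norm (x $ i)))"

lemma mv_smult: "(M::complex^'n::finite^'n) *v (c *s x) = c *s (M *v x)"
  by (simp add: vec_eq_iff matrix_vector_mult_def sum_distrib_left mult.left_commute)

lemma mv_diff: "(M::complex^'n::finite^'n) *v (x - y) = M *v x - M *v y"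
  by (simp add: vec_eq_iff matrix_vector_mult_def algebra_simps sum_subtractf)

lemma vabs_nth: "vabs x $ i = complex_of_real (norm (x $ i))"
  by (simp add: vabs_def)

lemma norm_vabs: "norm (vabs x) = norm x"
  by (simp add: norm_vec_def vabs_def)


locale pf =
  fixes M :: "complex^'n::finite^'n" and E :: "'n \<Rightarrow> 'n \<Rightarrow> bool" and mu :: real
  assumes sym: "\<And>i j. M$i$j = M$j$i"
    and real: "\<And>i j. M$i$j = complex_of_real (Re (M$i$j))"
    and nonneg: "\<And>i j. Re (M$i$j) \<ge> 0"
    and irred: "\<And>i j. E i j \<Longrightarrow> Re (M$i$j) > 0"
    and conn: "\<And>i j. E\<^sup>*\<^sup>* i j"
    and top: "\<And>m. is_eigenvalue M m \<Longrightarrow> Re m \<le> mu"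
begin

lemma herm: "braket x (M *v y) = braket (M *v x) y"
proof -
  have c: "cnj (M$j$i) = M$i$j" for i j
    by (metis sym real complex_cnj_complex_of_real)
  have "braket x (M *v y) = (\<Sum>i\<in>UNIV. \<Sum>j\<in>UNIV. cnj (x$i) * M$i$j * y$j)"
    by (simp add: braket_def matrix_vector_mult_def sum_distrib_left mult.assoc)
  also have "\<dots> = (\<Sum>j\<in>UNIV. \<Sum>i\<in>UNIV. cnj (x$i) * M$i$j * y$j)"
    by (rule sum.swap)
  also have "\<dots> = braket (M *v x) y"
    by (simp add: braket_def matrix_vector_mult_def sum_distrib_right sum_distrib_left c mult.commute mult.left_commute)
  finally show ?thesis .
qed

lemma herm_inner: "inner x (M *v y) = inner y (M *v x)"
  using herm[of x y] braket_cnj[of "M *v x" y] by (simp add: inner_braket)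

lemma max_eig:
  assumes le: "\<And>z. inner z (M *v z) \<le> c * (norm z)^2"
    and eq: "inner x (M *v x) = c * (norm x)^2"
  shows "M *v x = c *\<^sub>R x"
proof -
  define L where "L z = M *v z - c *\<^sub>R z" for z
  have g: "inner z (L z) \<le> 0" for z
    using le[of z] by (simp add: L_def inner_diff_right norm_sq_inner)
  have g0: "inner x (L x) = 0"
    using eq by (simp add: L_def inner_diff_right norm_sq_inner)
  define y where "y = L x"
  define a where "a = inner y y"
  define b where "b = inner y (L y)"
  have Llin: "L (x + t *\<^sub>R y) = L x + t *\<^sub>R L y" for t
    by (simp add: L_def mv_add mv_scaleR algebra_simps)
  have sy: "inner x (L y) = inner y (L x)"
    by (simp add: L_def inner_diff_right herm_inner inner_commute)
  have exp: "inner (x + t *\<^sub>R y) (L (x + t *\<^sub>R y)) = 2 * t * a + t^2 * b" for t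
    unfolding Llin using g0 sy
    by (simp add: inner_add_left inner_add_right a_def b_def y_def power2_eq_square algebra_simps)
  have b0: "b \<le> 0" using g[of y] by (simp add: b_def)
  have "a = 0"
  proof (rule ccontr)
    assume "a \<noteq> 0"
    then have ap: "a > 0" by (simp add: a_def)
    define t where "t = a / (\<bar>b\<bar> + 1)"
    have tp: "t > 0" using ap by (simp add: t_def)
    have "t * \<bar>b\<bar> < a"
    proof -
      have "t * \<bar>b\<bar> = a * (\<bar>b\<bar> / (\<bar>b\<bar> + 1))" by (simp add: t_def)
      also have "\<dots> < a * 1" using ap by (intro mult_strict_left_mono) auto
      finally show ?thesis by simp
    qed
    have h1: "t * b \<ge> - (t * \<bar>b\<bar>)" using tp b0 by simp
    have h2: "t * (t * b) \<ge> t * (- (t * \<bar>b\<bar>))" using h1 tp by (intro mult_left_mono) auto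
    have h3: "t * (- (t * \<bar>b\<bar>)) > t * (- a)" using tp \<open>t * \<bar>b\<bar> < a\<close> by (intro mult_strict_left_mono) auto
    have h4: "t * a > 0" using tp ap by simp
    have "2 * t * a + t^2 * b > 0"
      using h2 h3 h4 by (simp add: power2_eq_square algebra_simps)
    with g[of "x + t *\<^sub>R y"] exp[of t] show False by simp
  qed
  then have "y = 0" by (simp add: a_def)
  then show ?thesis by (simp add: y_def L_def)
qed

lemma quad_scale: "inner (t *\<^sub>R z) (M *v (t *\<^sub>R z)) = t^2 * inner z (M *v z)"
  by (simp add: mv_scaleR power2_eq_square)

lemma rayleigh: "inner z (M *v z) \<le> mu * (norm z)^2"
proof -
  define f where "f z = inner z (M *v z)" for z :: "complex^'n"
  have cont: "continuous_on (sphere 0 1) f"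
    unfolding f_def by (intro continuous_intros)
  have ne: "sphere (0::complex^'n) 1 \<noteq> {}"
    by simp
  obtain x0 where x0: "x0 \<in> sphere 0 1" and mx: "\<And>z. z \<in> sphere 0 1 \<Longrightarrow> f z \<le> f x0"
    using continuous_attains_sup[OF compact_sphere ne cont] by blast
  have n1: "norm x0 = 1" using x0 by (simp add: sphere_def dist_norm)
  define m where "m = f x0"
  have le: "f z \<le> m * (norm z)^2" for z
  proof (cases "z = 0")
    case True then show ?thesis by (simp add: f_def)
  next
    case False
    define w where "w = (1 / norm z) *\<^sub>R z"
    have w: "w \<in> sphere 0 1" using False by (simp add: w_def sphere_def dist_norm)
    have z: "z = norm z *\<^sub>R w" using False by (simp add: w_def)
    have "f z = (norm z)^2 * f w" unfolding f_def by (subst z, subst z) (rule quad_scale)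
    also have "\<dots> \<le> (norm z)^2 * m" using mx[OF w] by (simp add: m_def mult_left_mono)
    finally show ?thesis by (simp add: mult.commute)
  qed
  have "M *v x0 = m *\<^sub>R x0"
    by (rule max_eig) (use le n1 in \<open>auto simp: f_def m_def\<close>)
  moreover have "x0 \<noteq> 0" using n1 by auto
  ultimately have "is_eigenvalue M (complex_of_real m)"
    unfolding is_eigenvalue_def by (metis ofreal_smult)
  then have "m \<le> mu" using top by fastforce
  then have "m * (norm z)^2 \<le> mu * (norm z)^2" by (simp add: mult_right_mono)
  then show ?thesis using le[of z] by (simp add: f_def)
qed

lemma vabs_ge: "inner x (M *v x) \<le> inner (vabs x) (M *v vabs x)"
proof -
  have e1: "inner x (M *v x) = (\<Sum>i\<in>UNIV. \<Sum>j\<in>UNIV. Re (cnj (x$i) * M$i$j * x$j))"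
    by (simp add: inner_braket braket_def matrix_vector_mult_def sum_distrib_left mult.assoc)
  have e2: "inner (vabs x) (M *v vabs x) = (\<Sum>i\<in>UNIV. \<Sum>j\<in>UNIV. norm (x$i) * Re (M$i$j) * norm (x$j))"
    by (simp add: inner_braket braket_def matrix_vector_mult_def sum_distrib_left mult.assoc vabs_nth)
  have t: "Re (cnj (x$i) * M$i$j * x$j) \<le> norm (x$i) * Re (M$i$j) * norm (x$j)" for i j
  proof -
    have "Re (cnj (x$i) * M$i$j * x$j) \<le> norm (cnj (x$i) * M$i$j * x$j)" by (rule complex_Re_le_cmod)
    also have "\<dots> = norm (x$i) * norm (M$i$j) * norm (x$j)" by (simp add: norm_mult)
    also have "norm (M$i$j) = Re (M$i$j)" using nonneg[of i j] real[of i j]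
      by (metis abs_of_nonneg norm_of_real)
    finally show ?thesis .
  qed
  show ?thesis unfolding e1 e2 by (intro sum_mono t)
qed

lemma eig_quad: "M *v x = complex_of_real mu *s x \<Longrightarrow> inner x (M *v x) = mu * (norm x)^2"
  by (simp add: ofreal_smult norm_sq_inner)

lemma vabs_eig:
  assumes "M *v x = complex_of_real mu *s x"
  shows "M *v vabs x = complex_of_real mu *s vabs x"
proof -
  have "M *v vabs x = mu *\<^sub>R vabs x"
  proof (rule max_eig)
    show "inner z (M *v z) \<le> mu * (norm z)^2" for z by (rule rayleigh)
    show "inner (vabs x) (M *v vabs x) = mu * (norm (vabs x))^2"
      using rayleigh[of "vabs x"] vabs_ge[of x] eig_quad[OF assms] by (simp add: norm_vabs)
  qed
  then show ?thesis by (simp add: ofreal_smult)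
qed

lemma nowhere_zero:
  assumes eig: "M *v x = complex_of_real mu *s x" and nz: "x \<noteq> 0"
  shows "x $ k \<noteq> 0"
proof
  assume xk: "x $ k = 0"
  have step: "x $ j = 0" if "x $ i = 0" "E i j" for i j
  proof -
    have "(M *v vabs x) $ i = 0" using vabs_eig[OF eig] that(1) by (simp add: vabs_nth)
    then have "Re ((M *v vabs x) $ i) = 0" by simp
    then have "(\<Sum>l\<in>UNIV. Re (M$i$l) * norm (x$l)) = 0"
      by (simp add: matrix_vector_mult_def vabs_nth)
    then have "\<forall>l\<in>UNIV. Re (M$i$l) * norm (x$l) = 0"
      by (subst (asm) sum_nonneg_eq_0_iff) (auto intro: mult_nonneg_nonneg nonneg)
    then have "Re (M$i$j) * norm (x$j) = 0" by blast
    with irred[OF that(2)] show ?thesis by simp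
  qed
  have "x $ l = 0" for l
  proof -
    have "E\<^sup>*\<^sup>* k l" by (rule conn)
    then show ?thesis by (induction rule: rtranclp_induct) (use xk step in auto)
  qed
  then have "x = 0" by (simp add: vec_eq_iff)
  with nz show False by simp
qed

lemma simple:
  assumes u: "M *v u = complex_of_real mu *s u" "u \<noteq> 0"
    and v: "M *v v = complex_of_real mu *s v"
  shows "\<exists>c. v = c *s u"
proof -
  define i0 :: 'n where "i0 = undefined"
  have ui: "u $ i0 \<noteq> 0" by (rule nowhere_zero[OF u])
  define w where "w = v - (v $ i0 / u $ i0) *s u"
  have wi: "w $ i0 = 0" using ui by (simp add: w_def)
  have "M *v w = complex_of_real mu *s w"
    by (simp add: w_def mv_diff mv_smult u v vector_ssub_ldistrib vector_smult_assoc mult.commute)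
  then have "w = 0" using nowhere_zero[of w i0] wi by auto
  then show ?thesis by (auto simp: w_def)
qed

lemma phase:
  assumes u: "M *v u = complex_of_real mu *s u" "u \<noteq> 0"
  shows "\<exists>c. u = c *s vabs u"
proof -
  have "vabs u \<noteq> 0" using u(2) by (metis norm_vabs norm_eq_zero)
  then show ?thesis using simple[OF vabs_eig[OF u(1)] _ u(1)] by blast
qed

end


lemma mv_add_mat: "((X::complex^'n::finite^'n) + Y) *v x = X *v x + Y *v x"
  by (simp add: vec_eq_iff matrix_vector_mult_def algebra_simps sum.distrib)

lemma mv_scaleR_mat: "((t::real) *\<^sub>R (X::complex^'n::finite^'n)) *v x = t *\<^sub>R (X *v x)"
  by (simp add: vec_eq_iff matrix_vector_mult_def scaleR_sum_right)

lemma P_nth: "(\<Sum>w\<in>W. outer (ket w) (ket w)) $ i $ j = (if i = j \<and> i \<in> W then 1 else (0::complex))"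
proof -
  have "(\<Sum>w\<in>W. outer (ket w) (ket w)) $ i $ j = (\<Sum>w\<in>W. (if i = w \<and> j = w then 1 else 0))"
    by (simp add: sum_component outer_def ket_def axis_def) (intro sum.cong refl; auto)
  also have "\<dots> = (if i = j \<and> i \<in> W then 1 else 0)"
    by (cases "i = j") (auto simp: sum.delta intro!: sum.neutral)
  finally show ?thesis .
qed

lemma negeig: "((- H) *v x = complex_of_real (- l) *s x) \<longleftrightarrow> (H *v x = complex_of_real l *s x)"
  by (auto simp: mv_neg vec_eq_iff)

lemma braket_smult: "braket (c *s a) (d *s b) = cnj c * d * braket a b"
  by (simp add: braket_def sum_distrib_left mult_ac)

theorem proposition3:
  fixes E :: "'n::finite \<Rightarrow> 'n \<Rightarrow> bool"
    and W :: "'n set"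
    and gam phi0 lam :: real
    and p v :: "complex^'n"
    and A H :: "complex^'n^'n"
  assumes graph: "simple_graph E" and conn: "connected_graph E"
    and A_def: "A = adjacency_matrix E"
    and W: "W \<noteq> {}"
    and gam: "gam > 0"
    and H_def: "H = - (gam *\<^sub>R A) - (\<Sum>w\<in>W. outer (ket w) (ket w))"
    and phi0_eig: "is_eigenvalue A (complex_of_real phi0)"
    and phi0_max: "\<forall>\<mu>. is_eigenvalue A \<mu> \<longrightarrow> Re \<mu> \<le> phi0"
    and p_eig: "A *v p = complex_of_real phi0 *s p" and p_norm: "norm p = 1"
    and lam_eig: "is_eigenvalue H (complex_of_real lam)"
    and lam_min: "\<forall>\<mu>. is_eigenvalue H \<mu> \<longrightarrow> lam \<le> Re \<mu>"
    and v_eig: "v \<noteq> 0" "H *v v = complex_of_real lam *s v"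
  shows "simple_eigenvalue H (complex_of_real lam) \<and> braket v p \<noteq> 0 \<and> lam < - gam * phi0"
proof -
  define P where "P = (\<Sum>w\<in>W. outer (ket w) (ket w))"
  define M where "M = - H"
  have MP: "M = gam *\<^sub>R A + P" by (simp add: M_def H_def P_def)
  have Pn: "P $ i $ j = (if i = j \<and> i \<in> W then 1 else 0)" for i j
    unfolding P_def by (rule P_nth)
  have Ent: "A $ i $ j = (if E i j then 1 else 0)" for i j by (simp add: A_def adjacency_matrix_def)
  have Mnth: "M $ i $ j = complex_of_real (gam * (if E i j then 1 else 0) + (if i = j \<and> i \<in> W then 1 else 0))" for i j
    by (simp add: MP Pn Ent) (auto simp: scaleR_conv_of_real)
  have gs: "\<And>x y. E x y \<Longrightarrow> E y x" and gi: "\<And>x. \<not> E x x"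
    using graph by (auto simp: simple_graph_def)
  have cn: "\<And>i j. E\<^sup>*\<^sup>* i j" using conn by (simp add: connected_graph_def)
  interpret pA: pf A E phi0
  proof
    show "A$i$j = A$j$i" for i j using gs[of i j] gs[of j i] by (simp add: Ent)
    show "A$i$j = complex_of_real (Re (A$i$j))" for i j by (simp add: Ent)
    show "Re (A$i$j) \<ge> 0" for i j by (simp add: Ent)
    show "E i j \<Longrightarrow> Re (A$i$j) > 0" for i j by (simp add: Ent)
    show "E\<^sup>*\<^sup>* i j" for i j by (rule cn)
    show "is_eigenvalue A m \<Longrightarrow> Re m \<le> phi0" for m using phi0_max by blast
  qed
  interpret pM: pf M E "- lam"
  proof
    show "M$i$j = M$j$i" for i j using gs[of i j] gs[of j i] by (simp add: Mnth)
    show "M$i$j = complex_of_real (Re (M$i$j))" for i j by (simp add: Mnth)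
    show "Re (M$i$j) \<ge> 0" for i j using gam by (simp add: Mnth)
    show "E i j \<Longrightarrow> Re (M$i$j) > 0" for i j using gam gi[of i] by (cases "i = j") (auto simp: Mnth)
    show "E\<^sup>*\<^sup>* i j" for i j by (rule cn)
    show "Re m \<le> - lam" if me: "is_eigenvalue M m" for m
    proof -
      obtain x where "x \<noteq> 0" "M *v x = m *s x" using me unfolding is_eigenvalue_def by blast
      then have "- (H *v x) = m *s x" by (simp only: M_def mv_neg)
      then have "H *v x = (- m) *s x" unfolding vec_eq_iff
        by (metis minus_minus mult_minus_left vector_scalar_mult_def vec_lambda_beta vector_uminus_component)
      then have "is_eigenvalue H (- m)" using \<open>x \<noteq> 0\<close> unfolding is_eigenvalue_def by blast
      then have "lam \<le> Re (- m)" using lam_min by blast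
      then show ?thesis by simp
    qed
  qed
  have Meig: "M *v x = complex_of_real (- lam) *s x \<longleftrightarrow> H *v x = complex_of_real lam *s x" for x
    unfolding M_def by (rule negeig)
  have vM: "M *v v = complex_of_real (- lam) *s v" using v_eig(2) Meig[of v] by simp
  have p0: "p \<noteq> 0" using p_norm by auto
  have S: "simple_eigenvalue H (complex_of_real lam)"
    unfolding simple_eigenvalue_def
  proof (intro conjI allI impI)
    show "is_eigenvalue H (complex_of_real lam)" by (rule lam_eig)
    fix u w assume "u \<noteq> 0" "H *v u = complex_of_real lam *s u" "H *v w = complex_of_real lam *s w"
    then have "M *v u = complex_of_real (- lam) *s u" "M *v w = complex_of_real (- lam) *s w"
      using Meig by simp_all
    then show "\<exists>c. w = c *s u" using pM.simple \<open>u \<noteq> 0\<close> by blast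
  qed
  obtain c where c: "v = c *s vabs v" using pM.phase[OF vM v_eig(1)] by (elim exE)
  obtain d where d: "p = d *s vabs p" using pA.phase[OF p_eig p0] by (elim exE)
  have c0: "c \<noteq> 0" using c v_eig(1) by (metis vector_smult_lzero)
  have d0: "d \<noteq> 0" using d p0 by (metis vector_smult_lzero)
  have pos: "(\<Sum>i\<in>UNIV. norm (v$i) * norm (p$i)) > 0"
    using pM.nowhere_zero[OF vM v_eig(1)] pA.nowhere_zero[OF p_eig p0]
    by (intro sum_pos) auto
  have "braket v p = cnj c * d * braket (vabs v) (vabs p)"
    by (subst c, subst d) (rule braket_smult)
  also have "braket (vabs v) (vabs p) = complex_of_real (\<Sum>i\<in>UNIV. norm (v$i) * norm (p$i))"
    by (simp add: braket_def vabs_nth)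
  finally have Beq: "braket v p = cnj c * d * complex_of_real (\<Sum>i\<in>UNIV. norm (v$i) * norm (p$i))" .
  have "complex_of_real (\<Sum>i\<in>UNIV. norm (v$i) * norm (p$i)) \<noteq> 0"
    using pos by (metis of_real_eq_0_iff less_irrefl)
  then have B: "braket v p \<noteq> 0" using Beq c0 d0 by (metis mult_eq_0_iff complex_cnj_zero_iff)
  have Pv: "(P *v p) $ i = (if i \<in> W then p $ i else 0)" for i
  proof -
    have "(P *v p) $ i = (\<Sum>j\<in>UNIV. if j = i then (if i \<in> W then p $ i else 0) else 0)"
      unfolding matrix_vector_mult_def vec_lambda_beta Pn by (intro sum.cong refl) auto
    then show ?thesis by simp
  qed
  have iP: "inner p (P *v p) = (\<Sum>i\<in>W. (norm (p$i))^2)"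
  proof -
    have "inner p (P *v p) = (\<Sum>i\<in>UNIV. if i \<in> W then (norm (p$i))^2 else 0)"
      by (simp add: inner_vec_def Pv dot_square_norm if_distrib cong: if_cong)
    also have "\<dots> = (\<Sum>i\<in>W. (norm (p$i))^2)" by (simp add: sum.If_cases)
    finally show ?thesis .
  qed
  have Spos: "(\<Sum>i\<in>W. (norm (p$i))^2) > 0"
    using W pA.nowhere_zero[OF p_eig p0] by (intro sum_pos) auto
  have iA: "inner p (gam *\<^sub>R (A *v p)) = gam * phi0"
  proof -
    have "A *v p = phi0 *\<^sub>R p" using p_eig by (simp add: ofreal_smult)
    moreover have "inner p p = 1" using p_norm by (simp add: dot_square_norm)
    ultimately show ?thesis by (simp only: inner_scaleR_right)
  qed
  have "inner p (M *v p) = gam * phi0 + (\<Sum>i\<in>W. (norm (p$i))^2)"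
  proof -
    have "M *v p = gam *\<^sub>R (A *v p) + P *v p" by (simp only: MP mv_add_mat mv_scaleR_mat)
    then have "inner p (M *v p) = inner p (gam *\<^sub>R (A *v p)) + inner p (P *v p)"
      by (simp only: inner_add_right)
    then show ?thesis by (simp only: iA iP)
  qed
  with pM.rayleigh[of p] p_norm Spos have L: "lam < - gam * phi0" by simp
  show ?thesis using S B L by blast
qed

end
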